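(* Let $F$ be an infinite field of characteristic $p>2$ and $k$ a positive integer. Let $x^i_1,\dots,x^i_{h_i}$ ($i=1,\dots,k$) be distinct variables, $x^i_t$ of degree $i$, and consider the graded monomial $T=(x^1_1)^{r^1_1}\cdots(x^1_{h_1})^{r^1_{h_1}}\cdots(x^k_1)^{r^k_1}\cdots(x^k_{h_k})^{r^k_{h_k}}$ with non-negative integer exponents. Let $r=\max\{r^i_t\}$. If $p>r$, then $T$ is not a $\mathbb{Z}$-graded identity of $E^{\infty}$.
   Context: $L$ is a vector space over $F$ with basis $e_1,e_2,\dots$, $E$ its unital Grassmann algebra (basis $1$ and $e_{i_1}\cdots e_{i_k}$, $i_1<\cdots<i_k$, with $e_ie_j=-e_je_i$). $E^{\infty}$ is $E$ with the $\mathbb{Z}$-grading induced by $\|e_i\|=0$ for $i$ even and $\|e_i\|=1$ for $i$ odd (basis monomials get the sum of degrees of their factors; $1$ has degree $0$). A graded polynomial is a graded identity of $A$ if it vanishes whenever each variable is replaced by an element of the homogeneous component of $A$ of that variable's degree. *)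

theory Defs
  imports Main
begin

text \<open>Unital Grassmann algebra E over a field, with generators e_1, e_2, ...
  An element is a coefficient function on finite index sets S (the basis
  monomial e_{i_1}...e_{i_k}, i_1 < ... < i_k, for S = {i_1,...,i_k}), with
  finitely many nonzero coefficients, supported on sets of positive indices.\<close>

definition grass_elem :: "(nat set \<Rightarrow> 'a::field) \<Rightarrow> bool" where
  "grass_elem f \<longleftrightarrow> finite {S. f S \<noteq> 0} \<and>
     (\<forall>S. f S \<noteq> 0 \<longrightarrow> finite S \<and> 0 \<notin> S)"

text \<open>Sign from reordering e_S e_T: (-1) to the number of inversions.\<close>
definition grass_sign :: "nat set \<Rightarrow> nat set \<Rightarrow> 'a::field" where
  "grass_sign S T = (-1) ^ card {(i, j). i \<in> S \<and> j \<in> T \<and> j < i}"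

definition grass_mult :: "(nat set \<Rightarrow> 'a::field) \<Rightarrow> (nat set \<Rightarrow> 'a) \<Rightarrow> nat set \<Rightarrow> 'a" where
  "grass_mult f g U = (if finite U then
      (\<Sum>S\<in>Pow U. grass_sign S (U - S) * f S * g (U - S)) else 0)"

definition grass_one :: "nat set \<Rightarrow> 'a::field" where
  "grass_one S = (if S = {} then 1 else 0)"

fun grass_prod_list :: "(nat set \<Rightarrow> 'a::field) list \<Rightarrow> nat set \<Rightarrow> 'a" where
  "grass_prod_list [] = grass_one"
| "grass_prod_list (f # fs) = grass_mult f (grass_prod_list fs)"

text \<open>Z-grading of E^infinity: ||e_i|| = 0 for i even, 1 for i odd; the degree
  of e_S is the number of odd indices in S.  Homogeneous component of degree d.\<close>
definition grass_hom :: "nat \<Rightarrow> (nat set \<Rightarrow> 'a::field) \<Rightarrow> bool" where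
  "grass_hom d f \<longleftrightarrow> grass_elem f \<and>
     (\<forall>S. f S \<noteq> 0 \<longrightarrow> card {j \<in> S. odd j} = d)"

text \<open>The graded monomial
  T = (x^1_1)^{r 1 1} ... (x^1_{h 1})^{r 1 (h 1)} ... (x^k_1)^{r k 1} ... (x^k_{h k})^{r k (h k)}
  evaluated at the substitution x^i_t := a i t.\<close>
definition monomial_eval ::
  "nat \<Rightarrow> (nat \<Rightarrow> nat) \<Rightarrow> (nat \<Rightarrow> nat \<Rightarrow> nat) \<Rightarrow> (nat \<Rightarrow> nat \<Rightarrow> nat set \<Rightarrow> 'a::field) \<Rightarrow> nat set \<Rightarrow> 'a" where
  "monomial_eval k h r a =
     grass_prod_list (concat (map (\<lambda>i. concat (map (\<lambda>t. replicate (r i t) (a i t)) [1..<Suc (h i)])) [1..<Suc k]))"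

definition graded_identity_Einf ::
  "nat \<Rightarrow> (nat \<Rightarrow> nat) \<Rightarrow> (nat \<Rightarrow> nat \<Rightarrow> nat) \<Rightarrow> 'a::field itself \<Rightarrow> bool" where
  "graded_identity_Einf k h r _ \<longleftrightarrow>
     (\<forall>a :: nat \<Rightarrow> nat \<Rightarrow> nat set \<Rightarrow> 'a.
        (\<forall>i t. 1 \<le> i \<and> i \<le> k \<and> 1 \<le> t \<and> t \<le> h i \<longrightarrow> grass_hom i (a i t)) \<longrightarrow>
        monomial_eval k h r a = (\<lambda>_. 0))"

end

theory Submission imports Defs "HOL-Library.Nat_Bijection" begin

definition blk :: "nat \<Rightarrow> nat set" where "blk m = {2*m+1, 2*m+2}"
definition bu :: "nat set \<Rightarrow> nat set" where "bu M = \<Union> (blk ` M)"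

lemma mem_bu: "x \<in> bu M \<longleftrightarrow> x > 0 \<and> (x - 1) div 2 \<in> M"
proof
  assume "x \<in> bu M" thus "x > 0 \<and> (x - 1) div 2 \<in> M" unfolding bu_def blk_def by auto
next
  assume h: "x > 0 \<and> (x - 1) div 2 \<in> M"
  have "x = 2 * ((x - 1) div 2) + 1 \<or> x = 2 * ((x - 1) div 2) + 2" using h[THEN conjunct1] by presburger
  thus "x \<in> bu M" using h unfolding bu_def blk_def by blast
qed

lemma bu_inj: "bu M = bu M' \<longleftrightarrow> M = M'"
proof
  assume h: "bu M = bu M'"
  have "m \<in> M \<longleftrightarrow> m \<in> M'" for m
    using h[unfolded set_eq_iff, rule_format, of "2*m+1"] by (simp add: mem_bu)
  then show "M = M'" by blast
qed simp

lemma bu_sub: "bu M \<subseteq> bu M' \<longleftrightarrow> M \<subseteq> M'"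
proof
  assume h: "bu M \<subseteq> bu M'"
  have "m \<in> M \<Longrightarrow> m \<in> M'" for m
    using h[unfolded subset_iff, rule_format, of "2*m+1"] by (simp add: mem_bu)
  then show "M \<subseteq> M'" by blast
qed (auto simp: mem_bu)

lemma bu_union: "bu (A \<union> B) = bu A \<union> bu B" by (auto simp: bu_def)
lemma bu_diff: "bu (A - B) = bu A - bu B" by (auto simp: mem_bu)
lemma bu_empty: "bu {} = {}" by (auto simp: bu_def)
lemma finite_bu: "finite M \<Longrightarrow> finite (bu M)" by (auto simp: bu_def blk_def)
lemma zero_bu: "0 \<notin> bu M" by (auto simp: mem_bu)

lemma odd_bu: "finite M \<Longrightarrow> card {j \<in> bu M. odd j} = card M"
proof -
  assume "finite M"
  have "{j \<in> bu M. odd j} = (\<lambda>m. 2*m+1) ` M"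
    by (auto simp: bu_def blk_def)
  moreover have "inj_on (\<lambda>m::nat. 2*m+1) M" by (auto simp: inj_on_def)
  ultimately show ?thesis by (simp add: card_image)
qed

lemma sign_bu:
  assumes "M \<inter> M' = {}" "finite M" "finite M'"
  shows "grass_sign (bu M) (bu M') = (1::'a::field)"
proof -
  let ?Q = "{(m,m'). m \<in> M \<and> m' \<in> M' \<and> m' < m}"
  have fQ: "finite ?Q" by (rule finite_subset[of _ "M \<times> M'"]) (auto simp: assms)
  have eq: "{(i, j). i \<in> bu M \<and> j \<in> bu M' \<and> j < i} = (\<Union>q\<in>?Q. blk (fst q) \<times> blk (snd q))"
  proof (rule set_eqI, rule iffI)
    fix x assume "x \<in> {(i, j). i \<in> bu M \<and> j \<in> bu M' \<and> j < i}"
    then obtain i j m m' where x: "x = (i,j)" "m \<in> M" "m' \<in> M'" "i \<in> blk m" "j \<in> blk m'" "j < i"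
      by (auto simp: bu_def)
    have "m \<noteq> m'" using assms(1) x by auto
    hence "m' < m" using x by (auto simp: blk_def)
    thus "x \<in> (\<Union>q\<in>?Q. blk (fst q) \<times> blk (snd q))" using x by auto
  next
    fix x assume "x \<in> (\<Union>q\<in>?Q. blk (fst q) \<times> blk (snd q))"
    thus "x \<in> {(i, j). i \<in> bu M \<and> j \<in> bu M' \<and> j < i}"
      by (auto simp: bu_def blk_def)
  qed
  have "card (\<Union>q\<in>?Q. blk (fst q) \<times> blk (snd q)) = (\<Sum>q\<in>?Q. card (blk (fst q) \<times> blk (snd q)))"
    by (rule card_UN_disjoint) (use fQ in \<open>auto simp: blk_def\<close>)
  also have "\<dots> = (\<Sum>q\<in>?Q. 4)" by (rule sum.cong) (auto simp: blk_def card_cartesian_product)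
  finally have "even (card {(i, j). i \<in> bu M \<and> j \<in> bu M' \<and> j < i})" using eq by simp
  thus ?thesis unfolding grass_sign_def by simp
qed

definition elA :: "nat \<Rightarrow> (nat \<Rightarrow> nat set) \<Rightarrow> nat set \<Rightarrow> 'a::field" where
  "elA R D S = (if \<exists>c<R. S = bu (D c) then 1 else 0)"

lemma inner:
  assumes D1: "\<forall>c<R. finite (D c) \<and> D c \<noteq> {}"
    and D2: "\<forall>c<R. \<forall>c'<R. c \<noteq> c' \<longrightarrow> D c \<inter> D c' = {}"
    and W: "finite W" "\<forall>c<R. D c \<inter> W = {}"
  shows "C \<subseteq> {..<R} \<Longrightarrow> card C = n \<Longrightarrow>
    grass_prod_list (replicate n (elA R D) @ L) (bu (\<Union>(D ` C) \<union> W)) = of_nat (fact n) * (grass_prod_list L (bu W) :: 'a::field)"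
proof (induction n arbitrary: C)
  case 0
  hence "C = {}" using finite_subset[OF 0(1)] by auto
  thus ?case by simp
next
  case (Suc n)
  have fC: "finite C" using finite_subset[OF Suc(2)] by auto
  let ?X = "\<Union>(D ` C) \<union> W"
  let ?U = "bu ?X"
  let ?g = "\<lambda>S. grass_sign S (?U - S) * elA R D S * (grass_prod_list (replicate n (elA R D) @ L) (?U - S) :: 'a)"
  have fX: "finite ?X" using fC D1 W Suc(2) by auto
  have fU: "finite ?U" using fX by (rule finite_bu)
  have "grass_prod_list (replicate (Suc n) (elA R D) @ L) ?U = (\<Sum>S\<in>Pow ?U. ?g S)"
    using fU by (simp add: grass_mult_def)
  also have "\<dots> = (\<Sum>S\<in>(\<lambda>c. bu (D c)) ` C. ?g S)"
  proof (rule sum.mono_neutral_right)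
    show "finite (Pow ?U)" using fU by simp
    show "(\<lambda>c. bu (D c)) ` C \<subseteq> Pow ?U" by (auto simp: bu_def)
    show "\<forall>S\<in>Pow ?U - (\<lambda>c. bu (D c)) ` C. ?g S = 0"
    proof
      fix S assume S: "S \<in> Pow ?U - (\<lambda>c. bu (D c)) ` C"
      show "?g S = 0"
      proof (cases "\<exists>c<R. S = bu (D c)")
        case True
        then obtain c where c: "c < R" "S = bu (D c)" by blast
        have "bu (D c) \<subseteq> ?U" using S c by blast
        hence "D c \<subseteq> ?X" by (simp only: bu_sub)
        moreover obtain x where x: "x \<in> D c" using D1[rule_format, OF c(1)] by blast
        ultimately have "x \<in> \<Union>(D ` C) \<or> x \<in> W" by blast
        moreover have "x \<notin> W" using W(2) c x by blast
        ultimately obtain c' where "c' \<in> C" "x \<in> D c'" by blast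
        moreover have "c' < R" using \<open>c' \<in> C\<close> Suc(2) by blast
        ultimately have "c' = c" using D2[rule_format, of c c'] c x by blast
        hence False using S c \<open>c' \<in> C\<close> by blast
        thus ?thesis ..
      qed (auto simp: elA_def)
    qed
  qed
  also have "\<dots> = (\<Sum>c\<in>C. ?g (bu (D c)))"
  proof (rule sum.reindex_cong[OF _ refl])
    show "inj_on (\<lambda>c. bu (D c)) C"
    proof (rule inj_onI)
      fix c c' assume "c \<in> C" "c' \<in> C" "bu (D c) = bu (D c')"
      hence "D c = D c'" "c < R" "c' < R" using bu_inj Suc(2) by auto
      thus "c = c'" using D1[rule_format, of c] D2[rule_format, of c c'] by auto
    qed
  qed simp
  also have "\<dots> = (\<Sum>c\<in>C. of_nat (fact n) * grass_prod_list L (bu W))"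
  proof (rule sum.cong[OF refl])
    fix c assume c: "c \<in> C"
    have cR: "c < R" using c Suc(2) by auto
    have e: "?X - D c = \<Union>(D ` (C - {c})) \<union> W"
    proof -
      have "\<forall>c'\<in>C. c' \<noteq> c \<longrightarrow> D c \<inter> D c' = {}" using D2 cR Suc(2) by blast
      moreover have "D c \<inter> W = {}" using W(2) cR by blast
      ultimately show ?thesis by blast
    qed
    have "?U - bu (D c) = bu (\<Union>(D ` (C - {c})) \<union> W)" by (simp add: bu_diff[symmetric] e)
    moreover have "grass_sign (bu (D c)) (?U - bu (D c)) = (1::'a)"
      unfolding bu_diff[symmetric] by (rule sign_bu) (use D1 cR fX in auto)
    moreover have "elA R D (bu (D c)) = (1::'a)" using cR by (auto simp: elA_def)
    moreover have "card (C - {c}) = n" using Suc(3) c fC by simp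
    moreover have "C - {c} \<subseteq> {..<R}" using Suc(2) by blast
    ultimately show "?g (bu (D c)) = of_nat (fact n) * grass_prod_list L (bu W)"
      using Suc.IH[of "C - {c}"] by simp
  qed
  also have "\<dots> = of_nat (fact (Suc n)) * grass_prod_list L (bu W)"
    using Suc(3) by (simp add: algebra_simps)
  finally show ?case .
qed

lemma outer:
  fixes G :: "'k list" and R :: "'k \<Rightarrow> nat" and D :: "'k \<Rightarrow> nat \<Rightarrow> nat set"
  assumes "distinct G"
    and "\<forall>v\<in>set G. \<forall>c<R v. finite (D v c) \<and> D v c \<noteq> {}"
    and "\<forall>v\<in>set G. \<forall>v'\<in>set G. \<forall>c<R v. \<forall>c'<R v'. (v,c) \<noteq> (v',c') \<longrightarrow> D v c \<inter> D v' c' = {}"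
  shows "grass_prod_list (concat (map (\<lambda>v. replicate (R v) (elA (R v) (D v))) G))
           (bu (\<Union>v\<in>set G. \<Union>c<R v. D v c)) = (\<Prod>v\<leftarrow>G. of_nat (fact (R v)) :: 'a::field)"
  using assms
proof (induction G)
  case Nil
  then show ?case by (simp add: bu_empty grass_one_def)
next
  case (Cons v G)
  let ?W = "\<Union>v\<in>set G. \<Union>c<R v. D v c"
  have fW: "finite ?W" using Cons.prems(2) by auto
  have dW: "\<forall>c<R v. D v c \<inter> ?W = {}"
  proof (intro allI impI)
    fix c assume c: "c < R v"
    have "\<forall>v'\<in>set G. \<forall>c'<R v'. D v c \<inter> D v' c' = {}"
    proof (intro ballI allI impI)
      fix v' c' assume v': "v' \<in> set G" "c' < R v'"
      have "v \<noteq> v'" using Cons.prems(1) v' by auto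
      thus "D v c \<inter> D v' c' = {}" using Cons.prems(3) v' c by simp
    qed
    thus "D v c \<inter> ?W = {}" by blast
  qed
  have D1: "\<forall>c<R v. finite (D v c) \<and> D v c \<noteq> {}" using Cons.prems(2) by simp
  have D2: "\<forall>c<R v. \<forall>c'<R v. c \<noteq> c' \<longrightarrow> D v c \<inter> D v c' = {}" using Cons.prems(3) by simp
  have IH: "grass_prod_list (concat (map (\<lambda>v. replicate (R v) (elA (R v) (D v))) G)) (bu ?W) =
     (\<Prod>v\<leftarrow>G. of_nat (fact (R v)) :: 'a)"
    using Cons.IH Cons.prems by simp
  have eq: "(\<Union>v\<in>set (v # G). \<Union>c<R v. D v c) = \<Union>(D v ` {..<R v}) \<union> ?W" by simp
  have "grass_prod_list (replicate (card {..<R v}) (elA (R v) (D v)) @ concat (map (\<lambda>v. replicate (R v) (elA (R v) (D v))) G))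
     (bu (\<Union>(D v ` {..<R v}) \<union> ?W)) = of_nat (fact (card {..<R v})) * grass_prod_list (concat (map (\<lambda>v. replicate (R v) (elA (R v) (D v))) G)) (bu ?W)"
    by (rule inner[OF D1 D2 fW dW]) auto
  also have "\<dots> = of_nat (fact (R v)) * (\<Prod>v\<leftarrow>G. of_nat (fact (R v)) :: 'a)"
    by (simp only: IH card_lessThan)
  finally show ?case
    unfolding eq card_lessThan by simp
qed

lemma fact_nz:
  assumes "n < CHAR('a::field)"
  shows "(of_nat (fact n) :: 'a) \<noteq> 0"
  using assms
proof (induction n)
  case 0 then show ?case by simp
next
  case (Suc n)
  have "\<not> CHAR('a) dvd Suc n" using Suc.prems by (auto dest: dvd_imp_le)
  hence "(of_nat (Suc n) :: 'a) \<noteq> 0" by (simp only: of_nat_eq_0_iff_char_dvd) simp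
  moreover have "(of_nat (fact n) :: 'a) \<noteq> 0" using Suc by simp
  ultimately show ?case by (simp only: fact_Suc of_nat_mult) simp
qed

lemma list_eq:
  "concat (map (\<lambda>v. f v) (concat (map (\<lambda>i. map (Pair i) (xs i)) ys))) =
   concat (map (\<lambda>i. concat (map (\<lambda>t. f (i,t)) (xs i))) ys)"
  by (induction ys) (auto simp: comp_def)

lemma distinct_G:
  "distinct ys \<Longrightarrow> (\<forall>i. distinct (xs i)) \<Longrightarrow> distinct (concat (map (\<lambda>i. map (Pair i) (xs i)) ys))"
  by (induction ys) (auto simp: distinct_map inj_on_def)

definition Dm :: "nat \<times> nat \<Rightarrow> nat \<Rightarrow> nat set" where
  "Dm v c = (\<lambda>j. prod_encode (fst v, prod_encode (snd v, prod_encode (c, j)))) ` {..<fst v}"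

lemma card_Dm: "card (Dm v c) = fst v"
  unfolding Dm_def by (subst card_image) (auto simp: inj_on_def)

lemma Dm_disj: "(v,c) \<noteq> (v',c') \<Longrightarrow> Dm v c \<inter> Dm v' c' = {}"
  unfolding Dm_def by (cases v; cases v') auto

lemma hom_el:
  assumes "1 \<le> i"
  shows "grass_hom i (elA (r i t) (Dm (i,t)) :: nat set \<Rightarrow> 'a::field)"
proof -
  have sub: "{S. (elA (r i t) (Dm (i,t)) S :: 'a) \<noteq> 0} \<subseteq> (\<lambda>c. bu (Dm (i,t) c)) ` {..<r i t}"
    by (auto simp: elA_def split: if_splits)
  have fD: "finite (Dm (i,t) c)" for c unfolding Dm_def by simp
  have ex: "(elA (r i t) (Dm (i,t)) S :: 'a) \<noteq> 0 \<Longrightarrow> \<exists>c. S = bu (Dm (i,t) c)" for S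
    by (auto simp: elA_def split: if_splits)
  have P: "finite S \<and> 0 \<notin> S \<and> card {j \<in> S. odd j} = i" if h: "(elA (r i t) (Dm (i,t)) S :: 'a) \<noteq> 0" for S
  proof -
    obtain c where "S = bu (Dm (i,t) c)" using ex[OF h] by blast
    thus ?thesis using fD[of c] by (simp add: finite_bu zero_bu odd_bu card_Dm)
  qed
  show ?thesis
    unfolding grass_hom_def grass_elem_def
    using finite_subset[OF sub] P by auto
qed

theorem mainTheorem9:
  fixes k :: nat and h :: "nat \<Rightarrow> nat" and r :: "nat \<Rightarrow> nat \<Rightarrow> nat" and p :: nat
  assumes "infinite (UNIV :: 'a::field set)"
    and "CHAR('a) = p" and "p > 2"
    and "k \<ge> 1"
    and "\<forall>i t. 1 \<le> i \<and> i \<le> k \<and> 1 \<le> t \<and> t \<le> h i \<longrightarrow> r i t < p"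
  shows "\<not> graded_identity_Einf k h r TYPE('a)"
proof
  assume gi: "graded_identity_Einf k h r TYPE('a)"
  define G where "G = concat (map (\<lambda>i. map (Pair i) [1..<Suc (h i)]) [1..<Suc k])"
  define R where "R = (\<lambda>v. r (fst v) (snd v))"
  define a where "a = (\<lambda>i t. elA (r i t) (Dm (i,t)) :: nat set \<Rightarrow> 'a)"
  have setG: "v \<in> set G \<Longrightarrow> 1 \<le> fst v \<and> fst v \<le> k \<and> 1 \<le> snd v \<and> snd v \<le> h (fst v)" for v
    unfolding G_def by auto
  have homs: "\<forall>i t. 1 \<le> i \<and> i \<le> k \<and> 1 \<le> t \<and> t \<le> h i \<longrightarrow> grass_hom i (a i t)"
    unfolding a_def by (intro allI impI hom_el) (elim conjE)
  have z: "monomial_eval k h r a = (\<lambda>_. 0)"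
    using mp[OF spec[OF gi[unfolded graded_identity_Einf_def], of a] homs] .
  have me: "monomial_eval k h r a = grass_prod_list (concat (map (\<lambda>v. replicate (R v) (elA (R v) (Dm v))) G))"
    unfolding monomial_eval_def G_def list_eq R_def a_def by simp
  have dG: "distinct G" unfolding G_def by (rule distinct_G) auto
  have D1: "\<forall>v\<in>set G. \<forall>c<R v. finite (Dm v c) \<and> Dm v c \<noteq> {}"
  proof (intro ballI allI impI)
    fix v c assume v: "v \<in> set G" "c < R v"
    have "1 \<le> fst v" using setG[OF v(1)] by (elim conjE)
    thus "finite (Dm v c) \<and> Dm v c \<noteq> {}" unfolding Dm_def by (auto simp: lessThan_empty_iff)
  qed
  have D2: "\<forall>v\<in>set G. \<forall>v'\<in>set G. \<forall>c<R v. \<forall>c'<R v'. (v,c) \<noteq> (v',c') \<longrightarrow> Dm v c \<inter> Dm v' c' = {}"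
    by (intro ballI allI impI Dm_disj)
  have "monomial_eval k h r a (bu (\<Union>v\<in>set G. \<Union>c<R v. Dm v c)) = (\<Prod>v\<leftarrow>G. of_nat (fact (R v)) :: 'a)"
    unfolding me by (rule outer[OF dG D1 D2])
  moreover have "(\<Prod>v\<leftarrow>G. of_nat (fact (R v)) :: 'a) \<noteq> 0"
  proof -
    have "\<forall>v\<in>set G. (of_nat (fact (R v)) :: 'a) \<noteq> 0"
    proof
      fix v assume v: "v \<in> set G"
      have "r (fst v) (snd v) < p" by (rule assms(5)[rule_format]) (rule setG[OF v])
      hence "R v < CHAR('a)" unfolding R_def assms(2) by assumption
      thus "(of_nat (fact (R v)) :: 'a) \<noteq> 0" by (rule fact_nz)
    qed
    thus ?thesis by (induction G) auto
  qed
  ultimately show False using z by simp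
qed

end
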